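(* Let $S=[S_1,\ldots,S_m]$ be a sequence of formulas and $S_i$ one of its formulas. Then both $\emptyset[S_i]\cdot S$ and $\emptyset[\neg S_i]\cdot S$ coincide with $\emptyset S$.
   Context: Propositional models are truth assignments over a finite set of variables; a formula used where a set of models is expected stands for its set of models. A doxastic state is a sequence $[C(0),\ldots,C(k)]$ of nonempty, pairwise disjoint sets of models covering all models. The flat doxastic state $\emptyset$ is $[\text{all models}]$. Lexicographic revision: $C\,\mathrm{lex}(A) = [C(0)\cap A,\ldots,C(k)\cap A, C(0)\setminus A,\ldots,C(k)\setminus A]$, empty sets discarded. For a sequence of formulas $T=[T_1,\ldots,T_n]$, $\emptyset T$ denotes $\emptyset$ revised lexicographically by $T_1$, then $T_2$, ..., then $T_n$. $\cdot$ denotes concatenation of sequences. *)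

theory Defs
  imports Main
begin

datatype 'v fml = Var 'v | Top | Bot | Neg "'v fml" | Conj "'v fml" "'v fml"
  | Disj "'v fml" "'v fml" | Imp "'v fml" "'v fml"

type_synonym 'v model = "'v \<Rightarrow> bool"

fun holds :: "'v model \<Rightarrow> 'v fml \<Rightarrow> bool" where
  "holds w (Var x) = w x"
| "holds w Top = True"
| "holds w Bot = False"
| "holds w (Neg f) = (\<not> holds w f)"
| "holds w (Conj f g) = (holds w f \<and> holds w g)"
| "holds w (Disj f g) = (holds w f \<or> holds w g)"
| "holds w (Imp f g) = (holds w f \<longrightarrow> holds w g)"

definition mods :: "'v fml \<Rightarrow> 'v model set" where
  "mods f = {w. holds w f}"

text \<open>A doxastic state is a list of sets of models [C(0),...,C(k)].\<close>
type_synonym 'v dstate = "'v model set list"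

definition flat :: "'v dstate" where
  "flat = [UNIV]"

definition lex :: "'v dstate \<Rightarrow> 'v fml \<Rightarrow> 'v dstate" where
  "lex C A = filter (\<lambda>c. c \<noteq> {})
      (map (\<lambda>c. c \<inter> mods A) C @ map (\<lambda>c. c - mods A) C)"

definition revs :: "'v dstate \<Rightarrow> 'v fml list \<Rightarrow> 'v dstate" where
  "revs C T = foldl lex C T"

end

theory Submission
  imports Defs
begin

definition blocks :: "'v fml list \<Rightarrow> 'v model set list" where
  "blocks T = foldl (\<lambda>B A. map (\<lambda>X. X \<inter> mods A) B @ map (\<lambda>X. X - mods A) B) [UNIV] T"

lemma filt_map: "f {} = {} \<Longrightarrow> filter (\<lambda>c. c \<noteq> {}) (map f (filter (\<lambda>c. c \<noteq> {}) L))
   = filter (\<lambda>c. c \<noteq> {}) (map f L)"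
  by (induction L) auto

lemma revs_blocks:
  assumes "\<forall>c\<in>set C. c \<noteq> {}"
  shows "revs C T = filter (\<lambda>c. c \<noteq> {}) (concat (map (\<lambda>X. map (\<lambda>c. c \<inter> X) C) (blocks T)))"
proof (induction T rule: rev_induct)
  case Nil
  then show ?case using assms by (simp add: revs_def blocks_def)
next
  case (snoc A T)
  have "revs C (T @ [A]) = lex (revs C T) A" by (simp add: revs_def)
  also have "\<dots> = filter (\<lambda>c. c \<noteq> {})
      (map (\<lambda>c. c \<inter> mods A) (concat (map (\<lambda>X. map (\<lambda>c. c \<inter> X) C) (blocks T)))
     @ map (\<lambda>c. c - mods A) (concat (map (\<lambda>X. map (\<lambda>c. c \<inter> X) C) (blocks T))))"
    unfolding snoc lex_def filter_append
    by (subst filt_map, simp)+ simp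
  also have "\<dots> = filter (\<lambda>c. c \<noteq> {}) (concat (map (\<lambda>X. map (\<lambda>c. c \<inter> X) C) (blocks (T @ [A]))))"
    by (simp add: blocks_def map_concat comp_def Int_assoc Int_Diff)
  finally show ?case .
qed

lemma blocks_split: "X \<in> set (blocks T) \<Longrightarrow> A \<in> set T \<Longrightarrow> X \<subseteq> mods A \<or> X \<inter> mods A = {}"
proof (induction T arbitrary: X rule: rev_induct)
  case Nil
  then show ?case by simp
next
  case (snoc B T)
  from snoc.prems(1) obtain Y where Y: "Y \<in> set (blocks T)" "X = Y \<inter> mods B \<or> X = Y - mods B"
    by (auto simp: blocks_def)
  show ?case
  proof (cases "A \<in> set T")
    case True
    from snoc.IH[OF Y(1) True] Y(2) show ?thesis by blast
  next
    case False
    with snoc.prems have "A = B" by simp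
    with Y(2) show ?thesis by blast
  qed
qed

lemma one_step:
  assumes "\<forall>X\<in>set B. X \<subseteq> M \<or> X \<inter> M = {}"
  shows "filter (\<lambda>c. c \<noteq> {}) (concat (map (\<lambda>X. map (\<lambda>c. c \<inter> X) (filter (\<lambda>c. c \<noteq> {}) [M, -M])) B))
       = filter (\<lambda>c. c \<noteq> {}) (concat (map (\<lambda>X. map (\<lambda>c. c \<inter> X) [UNIV]) B))"
  using assms
proof (induction B)
  case Nil
  then show ?case by simp
next
  case (Cons a x)
  then show ?case by (auto simp: Int_commute Diff_eq[symmetric] Int_absorb1 Diff_triv dest: subset_trans)
qed

lemma lex_flat: "lex flat A = filter (\<lambda>c. c \<noteq> {}) [mods A, - mods A]"
  by (simp add: lex_def flat_def Compl_eq_Diff_UNIV)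

lemma main_gen:
  assumes "\<forall>X\<in>set (blocks S). X \<subseteq> mods A \<or> X \<inter> mods A = {}"
  shows "revs flat ([A] @ S) = revs flat S"
proof -
  have "revs flat ([A] @ S) = revs (lex flat A) S" by (simp add: revs_def)
  also have "\<dots> = filter (\<lambda>c. c \<noteq> {}) (concat (map (\<lambda>X. map (\<lambda>c. c \<inter> X) (filter (\<lambda>c. c \<noteq> {}) [mods A, - mods A])) (blocks S)))"
    unfolding lex_flat by (rule revs_blocks) simp
  also have "\<dots> = filter (\<lambda>c. c \<noteq> {}) (concat (map (\<lambda>X. map (\<lambda>c. c \<inter> X) [UNIV]) (blocks S)))"
    by (rule one_step[OF assms])
  also have "\<dots> = revs flat S"
    using revs_blocks[of flat S] by (simp add: flat_def)
  finally show ?thesis .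
qed

theorem mainTheorem12:
  fixes S :: "('v::finite) fml list" and i :: nat
  assumes "i < length S"
  shows "revs flat ([S ! i] @ S) = revs flat S
       \<and> revs flat ([Neg (S ! i)] @ S) = revs flat S"
proof
  have in_S: "S ! i \<in> set S" using assms by simp
  show "revs flat ([S ! i] @ S) = revs flat S"
    by (rule main_gen) (use blocks_split in_S in blast)
  have "mods (Neg (S ! i)) = - mods (S ! i)" by (auto simp: mods_def)
  then show "revs flat ([Neg (S ! i)] @ S) = revs flat S"
    by (intro main_gen) (use blocks_split[OF _ in_S] in blast)
qed

end
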